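(* Let $\mu,\lambda\in\mathbb{R}$ with $\lambda\neq0$ and $\rho=\mu/\lambda>0$. Let $\tilde\sigma\in\mathbb{C}\setminus\{0\}$, $\sigma=\tilde\sigma/\lambda$, and let $\varphi\in\mathbb{B}$ satisfy $H_{\mu,\lambda}\varphi=\tilde\sigma\varphi$ (hence $\varphi(0)=0$). Put $\varphi_0(y)=\varphi(iy)$. Then $u\mapsto e^{-\frac12(u-\rho)^2}\frac{\varphi_0(u)}{u}$ is integrable on $(-\infty,0)$, and for all $y\le0$, $$\varphi_0'(y)=\sigma\,e^{\frac12(y-\rho)^2}\int_{-\infty}^{y}e^{-\frac12(u-\rho)^2}\frac{\varphi_0(u)}{u}\,du .$$
   Context: The Bargmann space is $\mathbb{B}=\{\varphi:\mathbb{C}\to\mathbb{C}\text{ entire};\ \int_{\mathbb{C}}|\varphi(z)|^2e^{-|z|^2}\,dx\,dy<\infty\}$. For real $\mu,\lambda$, $H_{\mu,\lambda}=\mu z\frac{d}{dz}+i\lambda\big(z\frac{d^2}{dz^2}+z^2\frac{d}{dz}\big)$. *)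

theory Defs
  imports "HOL-Complex_Analysis.Complex_Analysis"
begin

definition bargmann :: "(complex \<Rightarrow> complex) \<Rightarrow> bool" where
  "bargmann \<phi> \<longleftrightarrow> \<phi> holomorphic_on UNIV \<and>
     integrable lborel (\<lambda>z::complex. (cmod (\<phi> z))^2 * exp (- ((cmod z)^2)))"

definition H_op :: "real \<Rightarrow> real \<Rightarrow> (complex \<Rightarrow> complex) \<Rightarrow> complex \<Rightarrow> complex" where
  "H_op mu lam \<phi> z =
     of_real mu * z * deriv \<phi> z
     + \<i> * of_real lam * (z * deriv (deriv \<phi>) z + z^2 * deriv \<phi> z)"

end

theory Submission
  imports Defs
begin


lemma borel_measurable_Complex[measurable]:
  assumes [measurable]: "f \<in> borel_measurable M" "g \<in> borel_measurable M"
  shows "(\<lambda>x. Complex (f x) (g x)) \<in> borel_measurable M"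
proof -
  have "(\<lambda>x. Complex (f x) (g x)) = (\<lambda>x. of_real (f x) + \<i> * of_real (g x))"
    by (auto simp: complex_eq_iff)
  moreover have "(\<lambda>x. of_real (f x) + \<i> * of_real (g x) :: complex) \<in> borel_measurable M" by measurable
  ultimately show ?thesis by simp
qed

lemma lborel_complex:
  "distr (lborel \<Otimes>\<^sub>M lborel) borel (\<lambda>(x,y). Complex x y) = (lborel :: complex measure)"
proof (rule lborel_eqI[symmetric])
  fix l u :: complex
  assume lu: "\<And>b. b \<in> Basis \<Longrightarrow> l \<bullet> b \<le> u \<bullet> b"
  have [measurable]: "(\<lambda>(x,y). Complex x y) \<in> borel_measurable (lborel \<Otimes>\<^sub>M lborel)"
    by measurable
  have "(\<lambda>(x,y). Complex x y) -` box l u \<inter> space (lborel \<Otimes>\<^sub>M lborel) = box (Re l) (Re u) \<times> box (Im l) (Im u)"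
    by (auto simp: space_pair_measure in_box_complex_iff)
  then have "emeasure (distr (lborel \<Otimes>\<^sub>M lborel) borel (\<lambda>(x,y). Complex x y)) (box l u)
      = emeasure (lborel \<Otimes>\<^sub>M lborel) (box (Re l) (Re u) \<times> box (Im l) (Im u))"
    by (subst emeasure_distr) auto
  also have "\<dots> = emeasure lborel (box (Re l) (Re u)) * emeasure lborel (box (Im l) (Im u))"
    by (rule lborel.emeasure_pair_measure_Times) auto
  also have "\<dots> = ennreal (\<Prod>b\<in>Basis. (u - l) \<bullet> b)"
    using lu[of 1] lu[of \<i>]
    by (simp add: Basis_complex_def ennreal_mult)
  finally show "emeasure (distr (lborel \<Otimes>\<^sub>M lborel) borel (\<lambda>(x,y). Complex x y)) (box l u) = (\<Prod>b\<in>Basis. (u - l) \<bullet> b)" .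
qed simp

lemma nn_integral_complex:
  assumes [measurable]: "f \<in> borel_measurable (borel :: complex measure)"
  shows "(\<integral>\<^sup>+z. f z \<partial>lborel) = (\<integral>\<^sup>+x. \<integral>\<^sup>+y. f (Complex x y) \<partial>lborel \<partial>lborel)"
proof -
  have "(\<integral>\<^sup>+z. f z \<partial>lborel) = (\<integral>\<^sup>+z. f z \<partial>(distr (lborel \<Otimes>\<^sub>M lborel) borel (\<lambda>(x,y). Complex x y)))"
    by (simp add: lborel_complex)
  also have "\<dots> = (\<integral>\<^sup>+p. f (case p of (x,y) \<Rightarrow> Complex x y) \<partial>(lborel \<Otimes>\<^sub>M lborel))"
    by (subst nn_integral_distr) auto
  also have "\<dots> = (\<integral>\<^sup>+x. \<integral>\<^sup>+y. f (Complex x y) \<partial>lborel \<partial>lborel)"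
    by (subst lborel.nn_integral_fst[symmetric]) auto
  finally show ?thesis .
qed




lemma has_contour_integral_linepath_same_Im_iff:
  assumes "Im z = c" "Im z' = c" "Re z = a" "Re z' = b" "a < b"
  shows   "(f has_contour_integral I) (linepath z z') \<longleftrightarrow>
             ((\<lambda>x. f (Complex x c)) has_integral I) {a..b}"
proof -
  have "(f has_contour_integral I) (linepath z z') \<longleftrightarrow>
          ((\<lambda>x. f (linepath z z' x) * (z' - z)) has_integral I) {0..1}"
    by (subst has_contour_integral_linepath) simp_all
  also have "\<dots> \<longleftrightarrow> ((\<lambda>x. f (Complex (a + (b - a) * x) c) * of_real (b - a)) has_integral I) {0..1}"
    using assms
    by (intro has_integral_cong arg_cong2[of _ _ _ _ "(*)"] arg_cong[of _ _ f])
       (auto simp: linepath_def complex_eq_iff algebra_simps)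
  also have "{0..1} = (\<lambda>x. x / (b - a)) ` {0..b-a}"
    using assms by simp
  also have "((\<lambda>x. f (Complex (a + (b - a) * x) c) * of_real (b - a)) has_integral I) \<dots> \<longleftrightarrow>
             ((\<lambda>x. f (Complex (a + x) c) * of_real (b - a)) has_integral ((b-a) *\<^sub>R I)) {0..b-a}"
    by (subst has_integral_stretch_real_iff) (use assms in simp_all)
  also have "\<dots> \<longleftrightarrow> ((\<lambda>x. of_real (b-a) * (f (Complex x c))) has_integral (b-a) *\<^sub>R I) {a..b}"
    by (subst has_integral_shift_real_ivl_iff[where c = "-a"])
       (simp_all add: scaleR_conv_of_real mult_ac)
  also have "\<dots> \<longleftrightarrow> ((\<lambda>x. f (Complex x c)) has_integral I) {a..b}"
    by (subst has_integral_mult_right_iff) (use assms in \<open>auto simp: scaleR_conv_of_real\<close>)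
  finally show ?thesis .
qed




lemma integral_to_nn:
  fixes F :: "real \<Rightarrow> real"
  assumes "continuous_on {a..b} F" "\<And>y. F y \<ge> 0"
  shows "ennreal (integral {a..b} F) = (\<integral>\<^sup>+y. ennreal (F y) * indicator {a..b} y \<partial>lborel)"
  using nn_integral_has_integral_lebesgue'[of "{a..b}" F "integral {a..b} F"] assms
  by (metis integrable_continuous_interval has_integral_integral)

lemma side_bound_V:
  fixes \<phi> :: "complex \<Rightarrow> complex"
  assumes cont: "continuous_on UNIV \<phi>" and s: "s > 0" and c: "\<bar>c - Re z\<bar> = s"
  shows "ennreal (norm (contour_integral (linepath (Complex c (Im z - s)) (Complex c (Im z + s))) (\<lambda>w. \<phi> w / (w - z))))
     \<le> ennreal (1/s) * (\<integral>\<^sup>+y. ennreal (norm (\<phi> (Complex c y))) * indicator {Im z - s..Im z + s} y \<partial>lborel)"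
proof -
  let ?g = "\<lambda>w. \<phi> w / (w - z)"
  let ?L = "linepath (Complex c (Im z - s)) (Complex c (Im z + s))"
  have nz: "Complex c y \<noteq> z" for y using c s by (auto simp: complex_eq_iff)
  have dist: "norm (Complex c y - z) \<ge> s" for y
    using abs_Re_le_cmod[of "Complex c y - z"] c by simp
  have cg: "continuous_on S ?g" if "z \<notin> S" for S
    using that by (intro continuous_intros continuous_on_subset[OF cont]) auto
  have "z \<notin> closed_segment (Complex c (Im z - s)) (Complex c (Im z + s))"
    using c s by (auto simp: closed_segment_same_Re complex_eq_iff)
  then have "?g contour_integrable_on ?L"
    by (intro contour_integrable_continuous_linepath cg)
  then have hc: "(?g has_contour_integral contour_integral ?L ?g) ?L"
    by (rule has_contour_integral_integral)
  have hi: "((\<lambda>y. ?g (Complex c y)) has_integral (-\<i> * contour_integral ?L ?g)) {Im z - s..Im z + s}"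
    using hc s by (subst (asm) has_contour_integral_linepath_same_Re_iff) auto
  have ccy: "continuous_on S (\<lambda>y. \<phi> (Complex c y))" for S
    by (intro continuous_on_compose2[OF cont]) (auto intro!: continuous_intros simp: Complex_eq)
  have "norm (contour_integral ?L ?g) = norm (integral {Im z - s..Im z + s} (\<lambda>y. ?g (Complex c y)))"
    using integral_unique[OF hi] by (simp add: norm_mult)
  also have "\<dots> \<le> integral {Im z - s..Im z + s} (\<lambda>y. norm (\<phi> (Complex c y)) / s)"
  proof (rule integral_norm_bound_integral)
    show "(\<lambda>y. ?g (Complex c y)) integrable_on {Im z - s..Im z + s}"
      using hi by blast
    show "(\<lambda>y. norm (\<phi> (Complex c y)) / s) integrable_on {Im z - s..Im z + s}"
      using s by (intro integrable_continuous_interval continuous_intros ccy) auto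
    fix y
    have "norm (?g (Complex c y)) = norm (\<phi> (Complex c y)) / norm (Complex c y - z)"
      by (simp add: norm_divide)
    also have "\<dots> \<le> norm (\<phi> (Complex c y)) / s"
      using dist[of y] s by (intro divide_left_mono) (auto intro!: mult_pos_pos)
    finally show "norm (?g (Complex c y)) \<le> norm (\<phi> (Complex c y)) / s" .
  qed
  also have "\<dots> = (1/s) * integral {Im z - s..Im z + s} (\<lambda>y. norm (\<phi> (Complex c y)))"
    by (simp add: divide_inverse mult.commute)
  finally have le: "norm (contour_integral ?L ?g) \<le> (1/s) * integral {Im z - s..Im z + s} (\<lambda>y. norm (\<phi> (Complex c y)))" .
  have "ennreal (norm (contour_integral ?L ?g)) \<le> ennreal ((1/s) * integral {Im z - s..Im z + s} (\<lambda>y. norm (\<phi> (Complex c y))))"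
    using le by (rule ennreal_leI)
  also have "\<dots> = ennreal (1/s) * ennreal (integral {Im z - s..Im z + s} (\<lambda>y. norm (\<phi> (Complex c y))))"
    using s integral_nonneg[of "\<lambda>y. norm (\<phi> (Complex c y))" "{Im z - s..Im z + s}"] ccy integrable_continuous_interval[OF continuous_on_norm[OF ccy]]
    by (subst ennreal_mult[symmetric]) (auto intro!: integrable_continuous_interval continuous_intros)
  also have "ennreal (integral {Im z - s..Im z + s} (\<lambda>y. norm (\<phi> (Complex c y)))) = (\<integral>\<^sup>+y. ennreal (norm (\<phi> (Complex c y))) * indicator {Im z - s..Im z + s} y \<partial>lborel)"
    by (rule integral_to_nn) (auto intro!: continuous_intros ccy)
  finally show ?thesis .
qed

lemma side_bound_H:
  fixes \<phi> :: "complex \<Rightarrow> complex"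
  assumes cont: "continuous_on UNIV \<phi>" and s: "s > 0" and c: "\<bar>c - Im z\<bar> = s"
  shows "ennreal (norm (contour_integral (linepath (Complex (Re z - s) c) (Complex (Re z + s) c)) (\<lambda>w. \<phi> w / (w - z))))
     \<le> ennreal (1/s) * (\<integral>\<^sup>+x. ennreal (norm (\<phi> (Complex x c))) * indicator {Re z - s..Re z + s} x \<partial>lborel)"
proof -
  let ?g = "\<lambda>w. \<phi> w / (w - z)"
  let ?L = "linepath (Complex (Re z - s) c) (Complex (Re z + s) c)"
  have dist: "norm (Complex y c - z) \<ge> s" for y
    using abs_Im_le_cmod[of "Complex y c - z"] c by simp
  have cg: "continuous_on S ?g" if "z \<notin> S" for S
    using that by (intro continuous_intros continuous_on_subset[OF cont]) auto
  have "z \<notin> closed_segment (Complex (Re z - s) c) (Complex (Re z + s) c)"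
    using c s by (auto simp: closed_segment_same_Im complex_eq_iff)
  then have "?g contour_integrable_on ?L"
    by (intro contour_integrable_continuous_linepath cg)
  then have hc: "(?g has_contour_integral contour_integral ?L ?g) ?L"
    by (rule has_contour_integral_integral)
  have hi: "((\<lambda>y. ?g (Complex y c)) has_integral (contour_integral ?L ?g)) {Re z - s..Re z + s}"
    using hc s by (subst (asm) has_contour_integral_linepath_same_Im_iff) auto
  have ccy: "continuous_on S (\<lambda>y. \<phi> (Complex y c))" for S
    by (intro continuous_on_compose2[OF cont]) (auto intro!: continuous_intros simp: Complex_eq)
  have "norm (contour_integral ?L ?g) = norm (integral {Re z - s..Re z + s} (\<lambda>y. ?g (Complex y c)))"
    using integral_unique[OF hi] by (simp add: norm_mult)
  also have "\<dots> \<le> integral {Re z - s..Re z + s} (\<lambda>y. norm (\<phi> (Complex y c)) / s)"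
  proof (rule integral_norm_bound_integral)
    show "(\<lambda>y. ?g (Complex y c)) integrable_on {Re z - s..Re z + s}"
      using hi by blast
    show "(\<lambda>y. norm (\<phi> (Complex y c)) / s) integrable_on {Re z - s..Re z + s}"
      using s by (intro integrable_continuous_interval continuous_intros ccy) auto
    fix y
    have "norm (?g (Complex y c)) = norm (\<phi> (Complex y c)) / norm (Complex y c - z)"
      by (simp add: norm_divide)
    also have "\<dots> \<le> norm (\<phi> (Complex y c)) / s"
      using dist[of y] s by (intro divide_left_mono) (auto intro!: mult_pos_pos)
    finally show "norm (?g (Complex y c)) \<le> norm (\<phi> (Complex y c)) / s" .
  qed
  also have "\<dots> = (1/s) * integral {Re z - s..Re z + s} (\<lambda>y. norm (\<phi> (Complex y c)))"
    by (simp add: divide_inverse mult.commute)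
  finally have le: "norm (contour_integral ?L ?g) \<le> (1/s) * integral {Re z - s..Re z + s} (\<lambda>y. norm (\<phi> (Complex y c)))" .
  have "ennreal (norm (contour_integral ?L ?g)) \<le> ennreal ((1/s) * integral {Re z - s..Re z + s} (\<lambda>y. norm (\<phi> (Complex y c))))"
    using le by (rule ennreal_leI)
  also have "\<dots> = ennreal (1/s) * ennreal (integral {Re z - s..Re z + s} (\<lambda>y. norm (\<phi> (Complex y c))))"
    using s integral_nonneg[of "\<lambda>y. norm (\<phi> (Complex y c))" "{Re z - s..Re z + s}"] ccy integrable_continuous_interval[OF continuous_on_norm[OF ccy]]
    by (subst ennreal_mult[symmetric]) (auto intro!: integrable_continuous_interval continuous_intros)
  also have "ennreal (integral {Re z - s..Re z + s} (\<lambda>y. norm (\<phi> (Complex y c)))) = (\<integral>\<^sup>+y. ennreal (norm (\<phi> (Complex y c))) * indicator {Re z - s..Re z + s} y \<partial>lborel)"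
    by (rule integral_to_nn) (auto intro!: continuous_intros ccy)
  finally show ?thesis .
qed




lemma rect_bound:
  fixes \<phi> :: "complex \<Rightarrow> complex"
  assumes holo: "\<phi> holomorphic_on UNIV" and s: "s > 0"
  shows "ennreal (2 * pi * norm (\<phi> z)) \<le> ennreal (1/s) *
     ((\<integral>\<^sup>+y. ennreal (norm (\<phi> (Complex (Re z + s) y))) * indicator {Im z - s..Im z + s} y \<partial>lborel)
    + (\<integral>\<^sup>+y. ennreal (norm (\<phi> (Complex (Re z - s) y))) * indicator {Im z - s..Im z + s} y \<partial>lborel)
    + (\<integral>\<^sup>+x. ennreal (norm (\<phi> (Complex x (Im z - s)))) * indicator {Re z - s..Re z + s} x \<partial>lborel)
    + (\<integral>\<^sup>+x. ennreal (norm (\<phi> (Complex x (Im z + s)))) * indicator {Re z - s..Re z + s} x \<partial>lborel))"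
proof -
  let ?g = "\<lambda>w. \<phi> w / (w - z)"
  have cont: "continuous_on UNIV \<phi>" using holo holomorphic_on_imp_continuous_on by blast
  define a1 where "a1 = Complex (Re z - s) (Im z - s)"
  define a2 where "a2 = Complex (Re z + s) (Im z - s)"
  define a3 where "a3 = Complex (Re z + s) (Im z + s)"
  define a4 where "a4 = Complex (Re z - s) (Im z + s)"
  have zbox: "z \<in> box a1 a3" using s by (auto simp: a1_def a3_def in_box_complex_iff)
  have le: "Re a1 \<le> Re a3" "Im a1 \<le> Im a3" using s by (auto simp: a1_def a3_def)
  have zni: "z \<notin> path_image (rectpath a1 a3)"
    using zbox le by (simp add: path_image_rectpath_cbox_minus_box)
  have "(?g has_contour_integral (2 * pi * \<i> * winding_number (rectpath a1 a3) z * \<phi> z)) (rectpath a1 a3)"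
    by (rule Cauchy_integral_formula_convex_simple[OF convex_UNIV holo]) (use zni in auto)
  moreover have "winding_number (rectpath a1 a3) z = 1"
    by (rule winding_number_rectpath) (use zbox in auto)
  ultimately have hc: "(?g has_contour_integral (2 * pi * \<i> * \<phi> z)) (rectpath a1 a3)" by simp
  have ci: "?g contour_integrable_on linepath p q" if "z \<notin> closed_segment p q" for p q
    using that by (intro contour_integrable_continuous_linepath continuous_intros continuous_on_subset[OF cont]) auto
  have r: "rectpath a1 a3 = linepath a1 a2 +++ linepath a2 a3 +++ linepath a3 a4 +++ linepath a4 a1"
    by (simp add: rectpath_def Let_def a1_def a2_def a3_def a4_def)
  have segs: "z \<notin> closed_segment a1 a2" "z \<notin> closed_segment a2 a3" "z \<notin> closed_segment a3 a4" "z \<notin> closed_segment a4 a1"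
    using zni unfolding r by (auto simp: path_image_join)
  have i1: "?g contour_integrable_on linepath a1 a2" and i2: "?g contour_integrable_on linepath a2 a3"
    and i3: "?g contour_integrable_on linepath a3 a4" and i4: "?g contour_integrable_on linepath a4 a1"
    using segs ci by auto
  have "2 * pi * \<i> * \<phi> z = contour_integral (rectpath a1 a3) ?g"
    using hc by (simp add: contour_integral_unique)
  also have "\<dots> = contour_integral (linepath a1 a2) ?g + contour_integral (linepath a2 a3) ?g
      + contour_integral (linepath a3 a4) ?g + contour_integral (linepath a4 a1) ?g"
    unfolding r using i1 i2 i3 i4
    by (simp add: contour_integrable_joinI valid_path_join)
  finally have eq: "2 * pi * \<i> * \<phi> z = contour_integral (linepath a1 a2) ?g + contour_integral (linepath a2 a3) ?g
      + contour_integral (linepath a3 a4) ?g + contour_integral (linepath a4 a1) ?g" .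
  have n3: "norm (contour_integral (linepath a3 a4) ?g) = norm (contour_integral (linepath a4 a3) ?g)"
    using contour_integral_reversepath[of "linepath a4 a3" ?g] by simp
  have n4: "norm (contour_integral (linepath a4 a1) ?g) = norm (contour_integral (linepath a1 a4) ?g)"
    using contour_integral_reversepath[of "linepath a1 a4" ?g] by simp
  have "2 * pi * norm (\<phi> z) = norm (2 * pi * \<i> * \<phi> z)"
    by (simp add: norm_mult)
  also have "\<dots> \<le> norm (contour_integral (linepath a1 a2) ?g) + norm (contour_integral (linepath a2 a3) ?g)
      + norm (contour_integral (linepath a4 a3) ?g) + norm (contour_integral (linepath a1 a4) ?g)"
    unfolding eq n3[symmetric] n4[symmetric] by norm
  finally have tri: "2 * pi * norm (\<phi> z) \<le> norm (contour_integral (linepath a1 a2) ?g) + norm (contour_integral (linepath a2 a3) ?g)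
      + norm (contour_integral (linepath a4 a3) ?g) + norm (contour_integral (linepath a1 a4) ?g)" .
  have "ennreal (2 * pi * norm (\<phi> z)) \<le> ennreal (norm (contour_integral (linepath a1 a2) ?g)) + ennreal (norm (contour_integral (linepath a2 a3) ?g))
      + ennreal (norm (contour_integral (linepath a4 a3) ?g)) + ennreal (norm (contour_integral (linepath a1 a4) ?g))"
    using ennreal_leI[OF tri] by (simp add: ennreal_plus[symmetric] del: ennreal_plus)
  also have "\<dots> \<le> ennreal (1/s) * (\<integral>\<^sup>+x. ennreal (norm (\<phi> (Complex x (Im z - s)))) * indicator {Re z - s..Re z + s} x \<partial>lborel)
     + ennreal (1/s) * (\<integral>\<^sup>+y. ennreal (norm (\<phi> (Complex (Re z + s) y))) * indicator {Im z - s..Im z + s} y \<partial>lborel)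
     + ennreal (1/s) * (\<integral>\<^sup>+x. ennreal (norm (\<phi> (Complex x (Im z + s)))) * indicator {Re z - s..Re z + s} x \<partial>lborel)
     + ennreal (1/s) * (\<integral>\<^sup>+y. ennreal (norm (\<phi> (Complex (Re z - s) y))) * indicator {Im z - s..Im z + s} y \<partial>lborel)"
    apply (intro add_mono)
    subgoal unfolding a1_def a2_def by (rule side_bound_H[OF cont s]) (use s in simp)
    subgoal unfolding a2_def a3_def by (rule side_bound_V[OF cont s]) (use s in simp)
    subgoal unfolding a4_def a3_def by (rule side_bound_H[OF cont s]) (use s in simp)
    subgoal unfolding a1_def a4_def by (rule side_bound_V[OF cont s]) (use s in simp)
    done
  also have "\<dots> = ennreal (1/s) *
     ((\<integral>\<^sup>+y. ennreal (norm (\<phi> (Complex (Re z + s) y))) * indicator {Im z - s..Im z + s} y \<partial>lborel)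
    + (\<integral>\<^sup>+y. ennreal (norm (\<phi> (Complex (Re z - s) y))) * indicator {Im z - s..Im z + s} y \<partial>lborel)
    + (\<integral>\<^sup>+x. ennreal (norm (\<phi> (Complex x (Im z - s)))) * indicator {Re z - s..Re z + s} x \<partial>lborel)
    + (\<integral>\<^sup>+x. ennreal (norm (\<phi> (Complex x (Im z + s)))) * indicator {Re z - s..Re z + s} x \<partial>lborel))"
    by (simp add: distrib_left add_ac)
  finally show ?thesis .
qed




lemma subst_bound:
  fixes G :: "real \<Rightarrow> ennreal"
  assumes [measurable]: "G \<in> borel_measurable borel" and c: "\<bar>c\<bar> = 1" and h: "h > 0"
  shows "(\<integral>\<^sup>+s. G (t + c * s) * indicator {h..2*h} s \<partial>lborel) \<le> (\<integral>\<^sup>+x. G x * indicator {t-2*h..t+2*h} x \<partial>lborel)"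
proof -
  have c0: "c \<noteq> 0" using c by auto
  have "(\<integral>\<^sup>+s. G (t + c * s) * indicator {h..2*h} s \<partial>lborel) \<le> (\<integral>\<^sup>+s. G (t + c * s) * indicator {t-2*h..t+2*h} (t + c * s) \<partial>lborel)"
  proof (intro nn_integral_mono)
    fix s
    show "G (t + c * s) * indicator {h..2*h} s \<le> G (t + c * s) * indicator {t-2*h..t+2*h} (t + c * s)"
    proof (cases "s \<in> {h..2*h}")
      case True
      then have "\<bar>c * s\<bar> \<le> 2*h" using c h by (simp add: abs_mult)
      then have "t + c * s \<in> {t-2*h..t+2*h}" by (auto simp: abs_le_iff)
      then show ?thesis using True by simp
    qed simp
  qed
  also have "\<dots> = (\<integral>\<^sup>+x. G x * indicator {t-2*h..t+2*h} x \<partial>lborel)"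
    using nn_integral_real_affine[of "\<lambda>x. G x * indicator {t-2*h..t+2*h} x" c t] c0 c by simp
  finally show ?thesis .
qed

lemma box_bound:
  fixes \<phi> :: "complex \<Rightarrow> complex"
  assumes holo: "\<phi> holomorphic_on UNIV" and h: "h > 0"
  shows "ennreal (2 * pi * h * norm (\<phi> z)) \<le> ennreal (4/h) *
     (\<integral>\<^sup>+x. \<integral>\<^sup>+y. ennreal (norm (\<phi> (Complex x y))) * indicator {Re z - 2*h..Re z + 2*h} x
           * indicator {Im z - 2*h..Im z + 2*h} y \<partial>lborel \<partial>lborel)"
proof -
  have cont: "continuous_on UNIV \<phi>" using holo holomorphic_on_imp_continuous_on by blast
  have [measurable]: "\<phi> \<in> borel_measurable borel" using cont by (rule borel_measurable_continuous_onI)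
  define X where "X = {Re z - 2*h..Re z + 2*h}"
  define Y where "Y = {Im z - 2*h..Im z + 2*h}"
  define Q where "Q = (\<integral>\<^sup>+x. \<integral>\<^sup>+y. ennreal (norm (\<phi> (Complex x y))) * indicator X x * indicator Y y \<partial>lborel \<partial>lborel)"
  define V where "V = (\<lambda>x. \<integral>\<^sup>+y. ennreal (norm (\<phi> (Complex x y))) * indicator Y y \<partial>lborel)"
  define H where "H = (\<lambda>y. \<integral>\<^sup>+x. ennreal (norm (\<phi> (Complex x y))) * indicator X x \<partial>lborel)"
  have [measurable]: "V \<in> borel_measurable borel" unfolding V_def Y_def by measurable
  have [measurable]: "H \<in> borel_measurable borel" unfolding H_def X_def by measurable
  have QV: "Q = (\<integral>\<^sup>+x. V x * indicator X x \<partial>lborel)"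
    unfolding Q_def
  proof (intro nn_integral_cong)
    fix x
    have "V x * indicator X x = (\<integral>\<^sup>+y. (ennreal (norm (\<phi> (Complex x y))) * indicator Y y) * indicator X x \<partial>lborel)"
      unfolding V_def by (rule nn_integral_multc[symmetric]) (simp add: Y_def)
    also have "\<dots> = (\<integral>\<^sup>+y. ennreal (norm (\<phi> (Complex x y))) * indicator X x * indicator Y y \<partial>lborel)"
      by (intro nn_integral_cong) (simp add: mult_ac)
    finally show "(\<integral>\<^sup>+y. ennreal (norm (\<phi> (Complex x y))) * indicator X x * indicator Y y \<partial>lborel) = V x * indicator X x" ..
  qed
  have QH: "Q = (\<integral>\<^sup>+y. H y * indicator Y y \<partial>lborel)"
  proof -
    have "Q = (\<integral>\<^sup>+y. \<integral>\<^sup>+x. ennreal (norm (\<phi> (Complex x y))) * indicator X x * indicator Y y \<partial>lborel \<partial>lborel)"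
      unfolding Q_def by (rule lborel_pair.Fubini'[symmetric]) (simp add: X_def Y_def)
    also have "\<dots> = (\<integral>\<^sup>+y. H y * indicator Y y \<partial>lborel)"
    proof (intro nn_integral_cong)
      fix y
      have e1: "H y * indicator Y y = (\<integral>\<^sup>+x. (ennreal (norm (\<phi> (Complex x y))) * indicator X x) * indicator Y y \<partial>lborel)"
        unfolding H_def by (rule nn_integral_multc[symmetric]) (simp add: X_def)
      have e2: "(\<integral>\<^sup>+x. (ennreal (norm (\<phi> (Complex x y))) * indicator X x) * indicator Y y \<partial>lborel) = (\<integral>\<^sup>+x. ennreal (norm (\<phi> (Complex x y))) * indicator X x * indicator Y y \<partial>lborel)"
        by (intro nn_integral_cong) (simp add: mult_ac)
      show "(\<integral>\<^sup>+x. ennreal (norm (\<phi> (Complex x y))) * indicator X x * indicator Y y \<partial>lborel) = H y * indicator Y y"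
        using e1 e2 by simp
    qed
    finally show ?thesis .
  qed
  have pt: "ennreal (2 * pi * norm (\<phi> z)) * indicator {h..2*h} s
      \<le> ennreal (1/h) * (V (Re z + s) + V (Re z + (-1) * s) + H (Im z + (-1) * s) + H (Im z + s)) * indicator {h..2*h} s" for s
  proof (cases "s \<in> {h..2*h}")
    case True
    then have s: "s > 0" "h \<le> s" "s \<le> 2*h" using h by auto
    have "ennreal (2 * pi * norm (\<phi> z)) \<le> ennreal (1/s) *
     ((\<integral>\<^sup>+y. ennreal (norm (\<phi> (Complex (Re z + s) y))) * indicator {Im z - s..Im z + s} y \<partial>lborel)
    + (\<integral>\<^sup>+y. ennreal (norm (\<phi> (Complex (Re z - s) y))) * indicator {Im z - s..Im z + s} y \<partial>lborel)
    + (\<integral>\<^sup>+x. ennreal (norm (\<phi> (Complex x (Im z - s)))) * indicator {Re z - s..Re z + s} x \<partial>lborel)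
    + (\<integral>\<^sup>+x. ennreal (norm (\<phi> (Complex x (Im z + s)))) * indicator {Re z - s..Re z + s} x \<partial>lborel))"
      by (rule rect_bound[OF holo s(1)])
    also have "\<dots> \<le> ennreal (1/h) * (V (Re z + s) + V (Re z + (-1) * s) + H (Im z + (-1) * s) + H (Im z + s))"
    proof (intro mult_mono add_mono)
      show "ennreal (1/s) \<le> ennreal (1/h)" using s h by (intro ennreal_leI) (simp add: frac_le)
      have Ysub: "indicator {Im z - s..Im z + s} y \<le> (indicator Y y :: ennreal)" for y
        using s unfolding Y_def by (auto simp: indicator_def)
      have Xsub: "indicator {Re z - s..Re z + s} y \<le> (indicator X y :: ennreal)" for y
        using s unfolding X_def by (auto simp: indicator_def)
      show "(\<integral>\<^sup>+y. ennreal (norm (\<phi> (Complex (Re z + s) y))) * indicator {Im z - s..Im z + s} y \<partial>lborel) \<le> V (Re z + s)"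
        unfolding V_def by (intro nn_integral_mono) (simp, rule mult_left_mono[OF Ysub], simp)
      show "(\<integral>\<^sup>+y. ennreal (norm (\<phi> (Complex (Re z - s) y))) * indicator {Im z - s..Im z + s} y \<partial>lborel) \<le> V (Re z + (-1) * s)"
        unfolding V_def by (intro nn_integral_mono) (simp, rule mult_left_mono[OF Ysub], simp)
      show "(\<integral>\<^sup>+x. ennreal (norm (\<phi> (Complex x (Im z - s)))) * indicator {Re z - s..Re z + s} x \<partial>lborel) \<le> H (Im z + (-1) * s)"
        unfolding H_def by (intro nn_integral_mono) (simp, rule mult_left_mono[OF Xsub], simp)
      show "(\<integral>\<^sup>+x. ennreal (norm (\<phi> (Complex x (Im z + s)))) * indicator {Re z - s..Re z + s} x \<partial>lborel) \<le> H (Im z + s)"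
        unfolding H_def by (intro nn_integral_mono) (simp, rule mult_left_mono[OF Xsub], simp)
    qed auto
    finally show ?thesis using True by simp
  qed simp
  have "ennreal (2 * pi * h * norm (\<phi> z)) = (\<integral>\<^sup>+s. ennreal (2 * pi * norm (\<phi> z)) * indicator {h..2*h} s \<partial>lborel)"
  proof -
    have "(\<integral>\<^sup>+s. ennreal (2 * pi * norm (\<phi> z)) * indicator {h..2*h} s \<partial>lborel) = ennreal (2 * pi * norm (\<phi> z)) * ennreal h"
      using h by (subst nn_integral_cmult_indicator) auto
    also have "\<dots> = ennreal (2 * pi * h * norm (\<phi> z))"
      using h by (simp add: ennreal_mult[symmetric] mult_ac)
    finally show ?thesis by simp
  qed
  also have "\<dots> \<le> (\<integral>\<^sup>+s. ennreal (1/h) * (V (Re z + s) + V (Re z + (-1) * s) + H (Im z + (-1) * s) + H (Im z + s)) * indicator {h..2*h} s \<partial>lborel)"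
    by (intro nn_integral_mono pt)
  also have "\<dots> = ennreal (1/h) * ((\<integral>\<^sup>+s. V (Re z + 1 * s) * indicator {h..2*h} s \<partial>lborel)
      + (\<integral>\<^sup>+s. V (Re z + (-1) * s) * indicator {h..2*h} s \<partial>lborel)
      + (\<integral>\<^sup>+s. H (Im z + (-1) * s) * indicator {h..2*h} s \<partial>lborel)
      + (\<integral>\<^sup>+s. H (Im z + 1 * s) * indicator {h..2*h} s \<partial>lborel))"
    by (simp add: nn_integral_cmult nn_integral_add distrib_right mult.assoc)
  also have "\<dots> \<le> ennreal (1/h) * ((\<integral>\<^sup>+x. V x * indicator X x \<partial>lborel) + (\<integral>\<^sup>+x. V x * indicator X x \<partial>lborel)
      + (\<integral>\<^sup>+y. H y * indicator Y y \<partial>lborel) + (\<integral>\<^sup>+y. H y * indicator Y y \<partial>lborel))"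
    unfolding X_def Y_def
    by (intro mult_left_mono add_mono subst_bound h) auto
  also have "\<dots> = ennreal (1/h) * (Q + Q + Q + Q)"
    by (simp only: QV[symmetric] QH[symmetric])
  also have "\<dots> = ennreal (4/h) * Q"
  proof -
    have q4: "Q + Q + Q + Q = ennreal 4 * Q"
    proof -
      have "Q + Q + Q + Q = (1 + 1 + 1 + 1) * Q" by (simp only: distrib_right mult_1_left)
      also have "(1 + 1 + 1 + 1 :: ennreal) = ennreal 4" by simp
      finally show ?thesis .
    qed
    have "ennreal (1/h) * ennreal 4 = ennreal (4/h)"
      using h ennreal_mult[of "1/h" 4] by simp
    then show ?thesis unfolding q4 by (simp add: mult.assoc[symmetric])
  qed
  finally show ?thesis unfolding Q_def X_def Y_def .
qed




lemma growth_bound: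
  fixes \<phi> :: "complex \<Rightarrow> complex"
  assumes B: "bargmann \<phi>" and h: "h > 0"
  obtains C where "\<And>z. norm (\<phi> z) \<le> C * exp ((norm z + 4*h)^2 / 2)"
proof -
  have holo: "\<phi> holomorphic_on UNIV" and int: "integrable lborel (\<lambda>z::complex. (cmod (\<phi> z))^2 * exp (- ((cmod z)^2)))"
    using B by (auto simp: bargmann_def)
  have cont: "continuous_on UNIV \<phi>" using holo holomorphic_on_imp_continuous_on by blast
  have [measurable]: "\<phi> \<in> borel_measurable borel" using cont by (rule borel_measurable_continuous_onI)
  define f where "f = (\<lambda>z::complex. (cmod (\<phi> z))^2 * exp (- ((cmod z)^2)))"
  have [measurable]: "f \<in> borel_measurable borel" unfolding f_def by measurable
  define Nr where "Nr = integral\<^sup>L lborel f"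
  have Nr0: "Nr \<ge> 0" unfolding Nr_def f_def by (intro integral_nonneg_AE) auto
  have N: "(\<integral>\<^sup>+x. \<integral>\<^sup>+y. ennreal (f (Complex x y)) \<partial>lborel \<partial>lborel) = ennreal Nr"
  proof -
    have "(\<integral>\<^sup>+x. \<integral>\<^sup>+y. ennreal (f (Complex x y)) \<partial>lborel \<partial>lborel) = (\<integral>\<^sup>+z. ennreal (f z) \<partial>lborel)"
      by (rule nn_integral_complex[symmetric]) measurable
    also have "\<dots> = ennreal Nr" unfolding Nr_def
      by (rule nn_integral_eq_integral) (use int in \<open>auto simp: f_def\<close>)
    finally show ?thesis .
  qed
  define C where "C = 4 * (Nr + 16 * h^2) / (2 * pi * h^2)"
  show ?thesis
  proof (rule that)
    fix z :: complex
    define M where "M = (norm z + 4*h)^2"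
    define X where "X = {Re z - 2*h..Re z + 2*h}"
    define Y where "Y = {Im z - 2*h..Im z + 2*h}"
    define K where "K = exp (M/2)"
    have K0: "K > 0" unfolding K_def by simp
    have pt: "ennreal (norm (\<phi> (Complex x y))) * indicator X x * indicator Y y
       \<le> ennreal K * ennreal (f (Complex x y)) + ennreal K * (indicator X x * indicator Y y)" for x y
    proof (cases "x \<in> X \<and> y \<in> Y")
      case True
      let ?w = "Complex x y"
      have "norm (?w - z) \<le> \<bar>Re (?w - z)\<bar> + \<bar>Im (?w - z)\<bar>" by (rule cmod_le)
      also have "\<dots> \<le> 4*h" using True unfolding X_def Y_def by (auto simp: abs_le_iff)
      finally have d: "norm (?w - z) \<le> 4*h" .
      have "norm ?w \<le> norm z + 4*h" using d norm_triangle_ineq2[of ?w z] by linarith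
      then have "(norm ?w)^2 \<le> M" unfolding M_def by (intro power_mono) auto
      then have e: "exp ((norm ?w)^2 / 2) \<le> K" unfolding K_def by simp
      define a where "a = norm (\<phi> ?w)"
      define t where "t = a * exp (- ((norm ?w)^2) / 2)"
      have a0: "a \<ge> 0" unfolding a_def by simp
      have t0: "t \<ge> 0" unfolding t_def a_def by simp
      have at: "a = t * exp ((norm ?w)^2 / 2)"
        unfolding t_def by (simp add: mult.assoc exp_add[symmetric])
      have tt: "t^2 = f ?w"
        unfolding t_def f_def a_def by (simp add: power_mult_distrib exp_double[symmetric] power2_eq_square exp_add[symmetric])
      have "0 \<le> (t - 1)^2" by simp
      then have "2*t \<le> t^2 + 1" by (simp add: power2_diff)
      with t0 have "t \<le> t^2 + 1" by linarith
      have "a \<le> t * K" unfolding at using e t0 by (intro mult_left_mono) auto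
      also have "\<dots> \<le> (t^2 + 1) * K" using \<open>t \<le> t^2 + 1\<close> K0 by (intro mult_right_mono) auto
      finally have "a \<le> K * f ?w + K" using tt by (simp add: algebra_simps)
      then have "ennreal a \<le> ennreal (K * f ?w + K)" by (rule ennreal_leI)
      also have "\<dots> = ennreal K * ennreal (f ?w) + ennreal K"
        using K0 by (simp add: ennreal_mult[symmetric] f_def ennreal_plus[symmetric] del: ennreal_plus)
      finally show ?thesis using True by (simp add: a_def)
    qed auto
    have box: "(\<integral>\<^sup>+x. \<integral>\<^sup>+y. indicator X x * indicator Y y \<partial>lborel \<partial>lborel) = ennreal (16 * h^2)"
    proof -
      have "(\<integral>\<^sup>+x. \<integral>\<^sup>+y. indicator X x * indicator Y y \<partial>lborel \<partial>lborel) = (\<integral>\<^sup>+x. indicator X x * ennreal (4*h) \<partial>lborel)"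
        using h by (intro nn_integral_cong) (simp add: nn_integral_cmult Y_def)
      also have "\<dots> = ennreal (4*h) * ennreal (4*h)"
        using h by (subst mult.commute) (simp add: nn_integral_cmult_indicator X_def)
      also have "\<dots> = ennreal (16 * h^2)" using h by (simp add: ennreal_mult[symmetric] power2_eq_square)
      finally show ?thesis .
    qed
    have "ennreal (2 * pi * h * norm (\<phi> z)) \<le> ennreal (4/h) *
     (\<integral>\<^sup>+x. \<integral>\<^sup>+y. ennreal (norm (\<phi> (Complex x y))) * indicator X x * indicator Y y \<partial>lborel \<partial>lborel)"
      unfolding X_def Y_def by (rule box_bound[OF holo h])
    also have "\<dots> \<le> ennreal (4/h) * (\<integral>\<^sup>+x. \<integral>\<^sup>+y. ennreal K * ennreal (f (Complex x y)) + ennreal K * (indicator X x * indicator Y y) \<partial>lborel \<partial>lborel)"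
      by (intro mult_left_mono nn_integral_mono pt) auto
    also have "(\<integral>\<^sup>+x. \<integral>\<^sup>+y. ennreal K * ennreal (f (Complex x y)) + ennreal K * (indicator X x * indicator Y y) \<partial>lborel \<partial>lborel)
       = ennreal K * (\<integral>\<^sup>+x. \<integral>\<^sup>+y. ennreal (f (Complex x y)) \<partial>lborel \<partial>lborel) + ennreal K * (\<integral>\<^sup>+x. \<integral>\<^sup>+y. indicator X x * indicator Y y \<partial>lborel \<partial>lborel)"
      unfolding X_def Y_def by (simp add: nn_integral_add nn_integral_cmult)
    also have "\<dots> = ennreal K * ennreal Nr + ennreal K * ennreal (16 * h^2)" unfolding N box ..
    also have "ennreal (4/h) * (ennreal K * ennreal Nr + ennreal K * ennreal (16 * h^2)) = ennreal (4/h * (K * Nr + K * (16 * h^2)))"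
      using h K0 Nr0 by (simp add: ennreal_mult[symmetric] ennreal_plus[symmetric] del: ennreal_plus)
    finally have "2 * pi * h * norm (\<phi> z) \<le> 4/h * (K * Nr + K * (16 * h^2))"
      using h K0 Nr0 by (subst (asm) ennreal_le_iff) auto
    then have "norm (\<phi> z) \<le> (4/h * (K * Nr + K * (16 * h^2))) / (2 * pi * h)"
      using h by (simp add: field_simps)
    also have "\<dots> = C * K" unfolding C_def using h by (simp add: field_simps power2_eq_square)
    finally show "norm (\<phi> z) \<le> C * exp ((norm z + 4*h)^2 / 2)" unfolding K_def M_def .
  qed
qed




lemma deriv_growth:
  fixes \<phi> :: "complex \<Rightarrow> complex"
  assumes holo: "\<phi> holomorphic_on UNIV" and h: "h > 0"
    and C: "\<And>z. norm (\<phi> z) \<le> C * exp ((norm z + 4*h)^2 / 2)"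
  shows "norm (deriv \<phi> z) \<le> (C / h) * exp ((norm z + 5*h)^2 / 2)"
proof -
  have C0: "C \<ge> 0" using C[of 0] by (smt (verit) exp_gt_zero norm_ge_zero zero_le_mult_iff)
  have "norm ((deriv ^^ 1) \<phi> z) \<le> fact 1 * (C * exp ((norm z + 5*h)^2 / 2)) / h^1"
  proof (rule Cauchy_inequality)
    show "\<phi> holomorphic_on ball z h" using holo by (rule holomorphic_on_subset) auto
    show "continuous_on (cball z h) \<phi>" using holo holomorphic_on_imp_continuous_on continuous_on_subset by blast
    show "0 < h" by fact
    fix x assume x: "norm (z - x) = h"
    have "norm x \<le> norm z + h" using x norm_triangle_ineq2[of x z] norm_minus_commute[of z x] by linarith
    then have "(norm x + 4*h)^2 \<le> (norm z + 5*h)^2" using h by (intro power_mono) auto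
    then have "exp ((norm x + 4*h)^2 / 2) \<le> exp ((norm z + 5*h)^2 / 2)" by simp
    then show "norm (\<phi> x) \<le> C * exp ((norm z + 5*h)^2 / 2)"
      using C[of x] C0 by (meson mult_left_mono order_trans)
  qed
  then show ?thesis by simp
qed

lemma exp_set_integrable:
  fixes c :: real assumes c: "c > 0"
  shows "set_integrable lborel {..0} (\<lambda>u. exp (c * u))"
proof -
  have "(\<integral>\<^sup>+x. ennreal (exp (- c * x)) * indicator {0..} x \<partial>lborel) = ennreal (0 - (- exp (- c * 0) / c))"
  proof (rule nn_integral_FTC_atLeast)
    show "(\<lambda>x. exp (- c * x)) \<in> borel_measurable borel" by measurable
    fix x :: real
    show "((\<lambda>x. - exp (- c * x) / c) has_real_derivative exp (- c * x)) (at x)"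
      using c by (auto intro!: derivative_eq_intros)
    show "0 \<le> exp (- c * x)" by simp
  next
    show "((\<lambda>x. - exp (- c * x) / c) \<longlongrightarrow> 0) at_top"
      using c by real_asymp
  qed
  then have A: "(\<integral>\<^sup>+x. ennreal (exp (- c * x)) * indicator {0..} x \<partial>lborel) < \<infinity>" by simp
  have E: "(\<integral>\<^sup>+x. ennreal (exp (- c * x)) * indicator {0..} x \<partial>lborel)
      = (\<integral>\<^sup>+u. ennreal (indicator {..0} u * exp (c * u)) \<partial>lborel)"
    by (subst nn_integral_real_affine[where c="-1" and t=0]) (auto intro!: nn_integral_cong simp: indicator_def)
  have B: "(\<integral>\<^sup>+u. ennreal (indicator {..0} u * exp (c * u)) \<partial>lborel) < \<infinity>" using A E by simp
  show ?thesis unfolding set_integrable_def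
    by (rule integrableI_nonneg) (use B in auto)
qed

lemma exp_ineq:
  fixes u a \<rho> :: real
  assumes "u \<le> 0" "0 \<le> a" "a \<le> \<rho> / 2"
  shows "exp ((\<bar>u\<bar> + a)^2 / 2) * exp (- ((u - \<rho>)^2) / 2) \<le> exp (\<rho> * u / 2)"
proof -
  have "(\<bar>u\<bar> + a)^2 / 2 + (- ((u - \<rho>)^2) / 2) = u * (\<rho> - a) + (a^2 - \<rho>^2) / 2"
    using assms by (simp add: abs_of_nonpos power2_eq_square field_simps)
  also have "\<dots> \<le> \<rho> * u / 2"
  proof -
    have "u * (\<rho> - a) \<le> u * (\<rho> / 2)" using assms by (intro mult_left_mono_neg) auto
    then have h1: "u * (\<rho> - a) \<le> \<rho> * u / 2" by (simp add: mult.commute)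
    have "a^2 \<le> \<rho>^2" using assms by (intro power_mono) auto
    then have h2: "(a^2 - \<rho>^2) / 2 \<le> 0" by simp
    from h1 h2 show ?thesis by linarith
  qed
  finally show ?thesis by (simp add: exp_add[symmetric])
qed




lemma chain_imag:
  fixes \<psi> :: "complex \<Rightarrow> complex"
  assumes "\<psi> holomorphic_on UNIV"
  shows "((\<lambda>t::real. \<psi> (\<i> * of_real t)) has_vector_derivative (\<i> * deriv \<psi> (\<i> * of_real t))) (at t)"
proof -
  have d: "(\<psi> has_field_derivative deriv \<psi> w) (at w)" for w
    using holomorphic_derivI[OF assms open_UNIV] by blast
  have "((\<lambda>w. \<psi> (\<i> * w)) has_field_derivative (\<i> * deriv \<psi> (\<i> * of_real t))) (at (of_real t))"
  proof -
    have d1: "((\<lambda>w. \<i> * w) has_field_derivative \<i>) (at (of_real t))"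
      by (auto intro!: derivative_eq_intros)
    show ?thesis using DERIV_chain2[OF d d1]
      by (simp only: mult.commute[of "deriv \<psi> (\<i> * of_real t)" \<i>])
  qed
  then show ?thesis by (rule has_vector_derivative_real_field)
qed

theorem proposition5p5:
  fixes mu lam :: real and \<sigma>t :: complex and \<phi> :: "complex \<Rightarrow> complex"
  assumes "lam \<noteq> 0"
    and "mu / lam > 0"
    and "\<sigma>t \<noteq> 0"
    and "bargmann \<phi>"
    and "\<And>z. H_op mu lam \<phi> z = \<sigma>t * \<phi> z"
  shows "set_integrable lborel {..<(0::real)}
           (\<lambda>u. complex_of_real (exp (- ((u - mu / lam)^2) / 2)) * \<phi> (\<i> * of_real u) / of_real u)
       \<and> (\<forall>y::real. y \<le> 0 \<longrightarrow>
           ((\<lambda>t::real. \<phi> (\<i> * of_real t)) has_vector_derivative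
              (\<sigma>t / of_real lam) * complex_of_real (exp ((y - mu / lam)^2 / 2)) *
              (LINT u:{..y}|lborel.
                 complex_of_real (exp (- ((u - mu / lam)^2) / 2)) * \<phi> (\<i> * of_real u) / of_real u))
           (at y))"
proof -
  note lam = assms(1) and ode = assms(5)
  define \<rho> where "\<rho> = mu / lam"
  have \<rho>0: "\<rho> > 0" using assms(2) unfolding \<rho>_def .
  have mu_eq: "mu = \<rho> * lam" unfolding \<rho>_def using lam by simp
  define \<sigma> where "\<sigma> = \<sigma>t / of_real lam"
  have holo: "\<phi> holomorphic_on UNIV" using assms(4) by (simp add: bargmann_def)
  have holo': "deriv \<phi> holomorphic_on UNIV" by (rule holomorphic_deriv[OF holo open_UNIV])
  have cont: "continuous_on UNIV \<phi>" using holo holomorphic_on_imp_continuous_on by blast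
  have cont': "continuous_on UNIV (deriv \<phi>)" using holo' holomorphic_on_imp_continuous_on by blast
  have [measurable]: "\<phi> \<in> borel_measurable borel" using cont by (rule borel_measurable_continuous_onI)
  define h where "h = \<rho> / 10"
  have h0: "h > 0" using \<rho>0 unfolding h_def by simp
  obtain C where C: "\<And>z. norm (\<phi> z) \<le> C * exp ((norm z + 4*h)^2 / 2)"
    using growth_bound[OF assms(4) h0] by blast
  have C0: "C \<ge> 0" using C[of 0] by (smt (verit) exp_gt_zero norm_ge_zero zero_le_mult_iff)
  have Cd: "\<And>z. norm (deriv \<phi> z) \<le> (C / h) * exp ((norm z + 5*h)^2 / 2)"
    by (rule deriv_growth[OF holo h0 C])
  have phi0: "\<phi> 0 = 0"
    using ode[of 0] assms(3) by (simp add: H_op_def)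
  define k where "k = (\<lambda>u::real. complex_of_real (exp (- ((u - \<rho>)^2) / 2)) * \<phi> (\<i> * of_real u) / of_real u)"
  have [measurable]: "k \<in> borel_measurable borel" unfolding k_def by measurable
  have C5: "norm (\<phi> z) \<le> C * exp ((norm z + 5*h)^2 / 2)" for z
  proof -
    have "(norm z + 4*h)^2 \<le> (norm z + 5*h)^2" using h0 by (intro power_mono) auto
    then have "exp ((norm z + 4*h)^2 / 2) \<le> exp ((norm z + 5*h)^2 / 2)" by simp
    then show ?thesis using C[of z] C0 by (meson mult_left_mono order_trans)
  qed
  have ei: "exp ((\<bar>u\<bar> + 5*h)^2 / 2) * exp (- ((u - \<rho>)^2) / 2) \<le> exp (\<rho> * u / 2)" if "u \<le> 0" for u
    by (rule exp_ineq) (use that h0 in \<open>auto simp: h_def\<close>)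
  define L where "L = (C / h) * exp ((1 + 5*h)^2 / 2)"
  have L0: "L \<ge> 0" unfolding L_def using C0 h0 by simp
  have Lip: "norm (\<phi> w) \<le> L * norm w" if "norm w \<le> 1" for w
  proof -
    have "norm (\<phi> w - \<phi> 0) \<le> L * norm (w - 0)"
    proof (rule field_differentiable_bound[of "cball 0 1"])
      show "convex (cball (0::complex) 1)" by simp
      fix z :: complex assume z: "z \<in> cball 0 1"
      show "(\<phi> has_field_derivative deriv \<phi> z) (at z within cball 0 1)"
        using holomorphic_derivI[OF holo open_UNIV] by blast
      have "(norm z + 5*h)^2 \<le> (1 + 5*h)^2" using z h0 by (intro power_mono) auto
      then have "exp ((norm z + 5*h)^2 / 2) \<le> exp ((1 + 5*h)^2 / 2)" by simp
      then show "norm (deriv \<phi> z) \<le> L"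
        unfolding L_def using Cd[of z] C0 h0
        by (meson divide_nonneg_pos mult_left_mono order_trans)
    qed (use that in auto)
    then show ?thesis using phi0 by simp
  qed
  define K where "K = C + L * exp (\<rho> / 2)"
  have K0: "K \<ge> 0" unfolding K_def using C0 L0 by simp
  have kb: "norm (k u) \<le> K * exp ((\<rho>/2) * u)" if u0: "u \<le> 0" for u
  proof -
    define E where "E = exp (- ((u - \<rho>)^2) / 2)"
    have E0: "E > 0" unfolding E_def by simp
    have E1: "E \<le> 1" unfolding E_def by simp
    have nk: "norm (k u) = E * norm (\<phi> (\<i> * of_real u)) / \<bar>u\<bar>"
      unfolding k_def E_def by (simp add: norm_mult norm_divide)
    consider "u \<le> -1" | "-1 < u" "u < 0" | "u = 0" by (cases "u \<le> -1"; cases "u < 0") (use u0 in auto)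
    then show ?thesis
    proof cases
      case 1
      have "norm (k u) \<le> E * norm (\<phi> (\<i> * of_real u))"
      proof -
        have "E * norm (\<phi> (\<i> * of_real u)) / \<bar>u\<bar> \<le> E * norm (\<phi> (\<i> * of_real u)) / 1"
          using 1 E0 by (intro divide_left_mono) auto
        then show ?thesis unfolding nk by simp
      qed
      also have "\<dots> \<le> E * (C * exp ((\<bar>u\<bar> + 5*h)^2 / 2))"
        using C5[of "\<i> * of_real u"] E0 by (simp add: norm_mult)
      also have "\<dots> = C * (exp ((\<bar>u\<bar> + 5*h)^2 / 2) * E)" by simp
      also have "\<dots> \<le> C * exp (\<rho> * u / 2)"
        unfolding E_def using ei[OF u0] C0 by (rule mult_left_mono)
      also have "\<dots> \<le> K * exp ((\<rho>/2) * u)" unfolding K_def using L0 by (simp add: algebra_simps)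
      finally show ?thesis .
    next
      case 2
      have "norm (\<phi> (\<i> * of_real u)) \<le> L * \<bar>u\<bar>"
        using Lip[of "\<i> * of_real u"] 2 by (simp add: norm_mult)
      then have "norm (k u) \<le> E * L"
      proof -
        have "norm (\<phi> (\<i> * of_real u)) / \<bar>u\<bar> \<le> L"
          using \<open>norm (\<phi> (\<i> * of_real u)) \<le> L * \<bar>u\<bar>\<close> pos_divide_le_eq[of "\<bar>u\<bar>"] 2 by simp
        then have "E * (norm (\<phi> (\<i> * of_real u)) / \<bar>u\<bar>) \<le> E * L"
          using E0 by (intro mult_left_mono) auto
        then show ?thesis unfolding nk by simp
      qed
      also have "\<dots> \<le> L" using E1 L0 mult_right_mono[of E 1 L] by simp
      also have "\<dots> \<le> L * (exp (\<rho>/2) * exp ((\<rho>/2) * u))"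
      proof -
        have "exp (\<rho>/2) * exp ((\<rho>/2) * u) = exp (\<rho>/2 * (1 + u))" by (simp add: exp_add[symmetric] algebra_simps)
        also have "\<dots> \<ge> 1" using 2 \<rho>0 by simp
        finally show ?thesis using L0 by (simp add: mult_le_cancel_left1)
      qed
      also have "\<dots> \<le> K * exp ((\<rho>/2) * u)" unfolding K_def using C0 by (simp add: algebra_simps)
      finally show ?thesis .
    next
      case 3
      then show ?thesis using K0 by (simp add: k_def)
    qed
  qed
  have kint: "set_integrable lborel {..0} k"
  proof (rule set_integrable_bound)
    show "set_integrable lborel {..0} (\<lambda>u. K * exp ((\<rho>/2) * u))"
      using exp_set_integrable[of "\<rho>/2"] \<rho>0 by (intro set_integrable_mult_right) auto
    show "set_borel_measurable lborel {..0} k" unfolding set_borel_measurable_def by measurable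
    show "AE x in lborel. x \<in> {..0} \<longrightarrow> norm (k x) \<le> norm (K * exp ((\<rho>/2) * x))"
      using kb K0 by (auto intro!: AE_I2)
  qed
  have part1: "set_integrable lborel {..<0} k"
    by (rule set_integrable_subset[OF kint]) auto
  have dF: "((\<lambda>t::real. \<phi> (\<i> * of_real t)) has_vector_derivative (\<i> * deriv \<phi> (\<i> * of_real t))) (at t)" for t
    by (rule chain_imag[OF holo])
  have dF': "((\<lambda>t::real. deriv \<phi> (\<i> * of_real t)) has_vector_derivative (\<i> * deriv (deriv \<phi>) (\<i> * of_real t))) (at t)" for t
    by (rule chain_imag[OF holo'])
  define G where "G = (\<lambda>t::real. exp (- ((t - \<rho>)^2) / 2) *\<^sub>R (\<i> * deriv \<phi> (\<i> * of_real t)))"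
  define G' where "G' = (\<lambda>t::real. exp (- ((t - \<rho>)^2) / 2) *\<^sub>R (\<i> * (\<i> * deriv (deriv \<phi>) (\<i> * of_real t)))
      + (exp (- ((t - \<rho>)^2) / 2) * (-(t - \<rho>))) *\<^sub>R (\<i> * deriv \<phi> (\<i> * of_real t)))"
  have dG: "(G has_vector_derivative G' t) (at t)" for t
  proof -
    have de: "((\<lambda>t. exp (- ((t - \<rho>)^2) / 2)) has_real_derivative (exp (- ((t - \<rho>)^2) / 2) * (-(t - \<rho>)))) (at t)"
      by (rule derivative_eq_intros refl | simp)+
    have dv: "((\<lambda>t. \<i> * deriv \<phi> (\<i> * of_real t)) has_vector_derivative (\<i> * (\<i> * deriv (deriv \<phi>) (\<i> * of_real t)))) (at t)"
      by (rule has_vector_derivative_mult_right[OF dF'])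
    show ?thesis unfolding G_def G'_def by (rule has_vector_derivative_scaleR[OF de dv])
  qed
  have Gcont: "continuous_on S G" for S
    by (intro continuous_at_imp_continuous_on ballI has_vector_derivative_continuous[OF dG])
  have Geq: "G' t = \<sigma> * k t" if t0: "t \<noteq> 0" for t
  proof -
    define A where "A = deriv \<phi> (\<i> * of_real t)"
    define B where "B = deriv (deriv \<phi>) (\<i> * of_real t)"
    define P where "P = \<phi> (\<i> * of_real t)"
    define E where "E = exp (- ((t - \<rho>)^2) / 2)"
    have o: "of_real mu * (\<i> * of_real t) * A + \<i> * of_real lam * ((\<i> * of_real t) * B + (\<i> * of_real t)^2 * A) = \<sigma>t * P"
      using ode[of "\<i> * of_real t"] unfolding H_op_def A_def B_def P_def .
    have key: "\<sigma>t * P = of_real t * of_real lam * (- B - \<i> * (of_real t - of_real \<rho>) * A)"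
      unfolding o[symmetric] mu_eq by (simp add: power2_eq_square algebra_simps)
    have "\<sigma> * k t = of_real E * (\<sigma>t * P) / (of_real lam * of_real t)"
      unfolding \<sigma>_def k_def E_def P_def by (simp add: field_simps)
    also have "\<dots> = of_real E * (- B - \<i> * (of_real t - of_real \<rho>) * A)"
      unfolding key using lam t0 by (simp add: field_simps)
    also have "\<dots> = G' t"
      unfolding G'_def A_def B_def E_def by (simp add: scaleR_conv_of_real algebra_simps)
    finally show ?thesis by simp
  qed
  have FTC: "G y - G a = \<sigma> * (LINT u:{a..y}|lborel. k u)" if ay: "a \<le> y" "y \<le> 0" for a y
  proof -
    have hi: "((\<lambda>x. \<sigma> * k x) has_integral (G y - G a)) {a..y}"
    proof (rule fundamental_theorem_of_calculus_interior[OF ay(1) Gcont])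
      fix x assume "x \<in> {a<..<y}"
      then have "x \<noteq> 0" using ay by auto
      then show "(G has_vector_derivative \<sigma> * k x) (at x)" using dG[of x] Geq[of x] by simp
    qed
    have ki: "set_integrable lborel {a..y} k"
      by (rule set_integrable_subset[OF kint]) (use ay in auto)
    have kI: "k integrable_on {a..y}" and kL: "(LINT u:{a..y}|lborel. k u) = integral {a..y} k"
      using set_borel_integral_eq_integral[OF ki] by auto
    have "((\<lambda>x. \<sigma> * k x) has_integral (\<sigma> * integral {a..y} k)) {a..y}"
      by (rule has_integral_mult_right[OF integrable_integral[OF kI]])
    then show ?thesis using hi kL by (metis has_integral_unique)
  qed
  have Gbound: "norm (G a) \<le> (C/h) * exp ((\<rho>/2) * a)" if a0: "a \<le> 0" for a
  proof -
    have "norm (G a) = exp (- ((a - \<rho>)^2) / 2) * norm (deriv \<phi> (\<i> * of_real a))"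
      unfolding G_def by (simp add: norm_mult)
    also have "\<dots> \<le> exp (- ((a - \<rho>)^2) / 2) * ((C / h) * exp ((\<bar>a\<bar> + 5*h)^2 / 2))"
      using Cd[of "\<i> * of_real a"] by (intro mult_left_mono) (auto simp: norm_mult)
    also have "\<dots> = (C / h) * (exp ((\<bar>a\<bar> + 5*h)^2 / 2) * exp (- ((a - \<rho>)^2) / 2))" by simp
    also have "\<dots> \<le> (C / h) * exp (\<rho> * a / 2)"
      using ei[OF a0] C0 h0 by (intro mult_left_mono) auto
    finally show ?thesis by (simp add: mult.commute)
  qed
  have G0: "(G \<longlongrightarrow> 0) at_bot"
  proof (rule Lim_null_comparison)
    show "eventually (\<lambda>a. norm (G a) \<le> (C/h) * exp ((\<rho>/2) * a)) at_bot"
      unfolding eventually_at_bot_linorder by (intro exI[of _ 0] allI impI Gbound)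
    show "((\<lambda>a. (C/h) * exp ((\<rho>/2) * a)) \<longlongrightarrow> 0) at_bot"
      using \<rho>0 by real_asymp
  qed
  have main: "((\<lambda>t::real. \<phi> (\<i> * of_real t)) has_vector_derivative
              (\<sigma>t / of_real lam) * complex_of_real (exp ((y - \<rho>)^2 / 2)) * (LINT u:{..y}|lborel. k u)) (at y)"
    if y0: "y \<le> 0" for y
  proof -
    have kiy: "set_integrable lborel {..y} k"
      by (rule set_integrable_subset[OF kint]) (use y0 in auto)
    have l1: "((\<lambda>a. \<sigma> * (LINT u:{a..y}|lborel. k u)) \<longlongrightarrow> \<sigma> * (LINT u:{..y}|lborel. k u)) at_bot"
      by (intro tendsto_mult_left tendsto_set_lebesgue_integral_at_bot kiy) auto
    have l0: "((\<lambda>a. G y - G a) \<longlongrightarrow> G y) at_bot"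
      using tendsto_diff[OF tendsto_const G0, of "G y"] by simp
    have ev: "eventually (\<lambda>a. G y - G a = \<sigma> * (LINT u:{a..y}|lborel. k u)) at_bot"
      unfolding eventually_at_bot_linorder by (intro exI[of _ y] allI impI FTC y0)
    have l2: "((\<lambda>a. \<sigma> * (LINT u:{a..y}|lborel. k u)) \<longlongrightarrow> G y) at_bot"
      by (rule Lim_transform_eventually[OF l0 ev])
    have Gy: "G y = \<sigma> * (LINT u:{..y}|lborel. k u)"
      using tendsto_unique[OF _ l2 l1] by simp
    have "\<i> * deriv \<phi> (\<i> * of_real y) = exp ((y - \<rho>)^2 / 2) *\<^sub>R G y"
      unfolding G_def by (simp add: exp_add[symmetric] exp_minus_inverse)
    also have "\<dots> = (\<sigma>t / of_real lam) * complex_of_real (exp ((y - \<rho>)^2 / 2)) * (LINT u:{..y}|lborel. k u)"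
      unfolding Gy \<sigma>_def by (simp add: scaleR_conv_of_real mult_ac)
    finally show ?thesis using dF[of y] by simp
  qed
  show ?thesis unfolding \<rho>_def[symmetric]
    using part1 main unfolding k_def by blast
qed


end
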